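(* Let $A$ be a complete MV-algebra (its natural-order lattice is complete) and let $\{d_i\}_{i\in\Omega}$ be any family of $(\odot,\vee)$-derivations on $A$. Then (1) the map $\bigvee_{i\in\Omega}d_i$, defined by $(\bigvee_i d_i)(x)=\bigvee_i d_i(x)$, is a $(\odot,\vee)$-derivation on $A$; and (2) $\operatorname{Der}(A)$, ordered pointwise, is a complete lattice with bottom $\mathbf{0}_A$ and top $\mathrm{Id}_A$.
   Context: An MV-algebra is an algebra $(A,\oplus,{}^*,0)$ of type $(2,1,0)$ satisfying: $x\oplus(y\oplus z)=(x\oplus y)\oplus z$, $x\oplus y=y\oplus x$, $x\oplus 0=x$, $x^{**}=x$, $x\oplus 0^*=0^*$, $(x^*\oplus y)^*\oplus y=(y^*\oplus x)^*\oplus x$. Put $1=0^*$ and $x\odot y=(x^*\oplus y^* )^*$. The natural order is $x\le y$ iff $x^*\oplus y=1$, with lattice operations $x\vee y=(x\odot y^* )\oplus y$, $x\wedge y=x\odot(x^*\oplus y)$. A $(\odot,\vee)$-derivation on $A$ is a map $d:A\to A$ with $d(x\odot y)=(d(x)\odot y)\vee(x\odot d(y))$ for all $x,y\in A$; $\operatorname{Der}(A)$ is the set of these, ordered by $d\preceq d'$ iff $d(x)\le d'(x)$ for all $x$. $\mathbf{0}_A$ is the constant zero map. *)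

theory Defs
  imports Main
begin

definition mv_algebra :: "('a \<Rightarrow> 'a \<Rightarrow> 'a) \<Rightarrow> ('a \<Rightarrow> 'a) \<Rightarrow> 'a \<Rightarrow> bool" where
  "mv_algebra oplus star zero \<longleftrightarrow>
     (\<forall>x y z. oplus x (oplus y z) = oplus (oplus x y) z) \<and>
     (\<forall>x y. oplus x y = oplus y x) \<and>
     (\<forall>x. oplus x zero = x) \<and>
     (\<forall>x. star (star x) = x) \<and>
     (\<forall>x. oplus x (star zero) = star zero) \<and>
     (\<forall>x y. oplus (star (oplus (star x) y)) y = oplus (star (oplus (star y) x)) x)"

definition mv_one :: "('a \<Rightarrow> 'a) \<Rightarrow> 'a \<Rightarrow> 'a" where
  "mv_one star zero = star zero"

definition mv_odot :: "('a \<Rightarrow> 'a \<Rightarrow> 'a) \<Rightarrow> ('a \<Rightarrow> 'a) \<Rightarrow> 'a \<Rightarrow> 'a \<Rightarrow> 'a" where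
  "mv_odot oplus star x y = star (oplus (star x) (star y))"

definition mv_le :: "('a \<Rightarrow> 'a \<Rightarrow> 'a) \<Rightarrow> ('a \<Rightarrow> 'a) \<Rightarrow> 'a \<Rightarrow> 'a \<Rightarrow> 'a \<Rightarrow> bool" where
  "mv_le oplus star zero x y \<longleftrightarrow> oplus (star x) y = mv_one star zero"

definition mv_join :: "('a \<Rightarrow> 'a \<Rightarrow> 'a) \<Rightarrow> ('a \<Rightarrow> 'a) \<Rightarrow> 'a \<Rightarrow> 'a \<Rightarrow> 'a" where
  "mv_join oplus star x y = oplus (mv_odot oplus star x (star y)) y"

definition mv_meet :: "('a \<Rightarrow> 'a \<Rightarrow> 'a) \<Rightarrow> ('a \<Rightarrow> 'a) \<Rightarrow> 'a \<Rightarrow> 'a \<Rightarrow> 'a" where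
  "mv_meet oplus star x y = mv_odot oplus star x (oplus (star x) y)"

definition mv_is_lub :: "('a \<Rightarrow> 'a \<Rightarrow> 'a) \<Rightarrow> ('a \<Rightarrow> 'a) \<Rightarrow> 'a \<Rightarrow> 'a set \<Rightarrow> 'a \<Rightarrow> bool" where
  "mv_is_lub oplus star zero S s \<longleftrightarrow>
     (\<forall>x\<in>S. mv_le oplus star zero x s) \<and>
     (\<forall>u. (\<forall>x\<in>S. mv_le oplus star zero x u) \<longrightarrow> mv_le oplus star zero s u)"

definition mv_complete :: "('a \<Rightarrow> 'a \<Rightarrow> 'a) \<Rightarrow> ('a \<Rightarrow> 'a) \<Rightarrow> 'a \<Rightarrow> bool" where
  "mv_complete oplus star zero \<longleftrightarrow> (\<forall>S. \<exists>s. mv_is_lub oplus star zero S s)"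

definition mv_Sup :: "('a \<Rightarrow> 'a \<Rightarrow> 'a) \<Rightarrow> ('a \<Rightarrow> 'a) \<Rightarrow> 'a \<Rightarrow> 'a set \<Rightarrow> 'a" where
  "mv_Sup oplus star zero S = (THE s. mv_is_lub oplus star zero S s)"

definition mv_derivation :: "('a \<Rightarrow> 'a \<Rightarrow> 'a) \<Rightarrow> ('a \<Rightarrow> 'a) \<Rightarrow> ('a \<Rightarrow> 'a) \<Rightarrow> bool" where
  "mv_derivation oplus star d \<longleftrightarrow>
     (\<forall>x y. d (mv_odot oplus star x y) =
       mv_join oplus star (mv_odot oplus star (d x) y) (mv_odot oplus star x (d y)))"

definition Der :: "('a \<Rightarrow> 'a \<Rightarrow> 'a) \<Rightarrow> ('a \<Rightarrow> 'a) \<Rightarrow> ('a \<Rightarrow> 'a) set" where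
  "Der oplus star = {d. mv_derivation oplus star d}"

definition der_le :: "('a \<Rightarrow> 'a \<Rightarrow> 'a) \<Rightarrow> ('a \<Rightarrow> 'a) \<Rightarrow> 'a \<Rightarrow> ('a \<Rightarrow> 'a) \<Rightarrow> ('a \<Rightarrow> 'a) \<Rightarrow> bool" where
  "der_le oplus star zero d d' \<longleftrightarrow> (\<forall>x. mv_le oplus star zero (d x) (d' x))"

end

theory Submission
  imports Defs
begin

locale mvl =
  fixes pl :: "'a \<Rightarrow> 'a \<Rightarrow> 'a" (infixl "+++" 65) and st :: "'a \<Rightarrow> 'a" and z :: 'a
  assumes mv: "mv_algebra pl st z"
begin

lemma assoc: "x +++ (y +++ w) = (x +++ y) +++ w" using mv unfolding mv_algebra_def by blast
lemma comm: "x +++ y = y +++ x" using mv unfolding mv_algebra_def by blast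
lemma zr: "x +++ z = x" using mv unfolding mv_algebra_def by blast
lemma ss[simp]: "st (st x) = x" using mv unfolding mv_algebra_def by blast
lemma one: "x +++ st z = st z" using mv unfolding mv_algebra_def by blast
lemma ax6: "st (st x +++ y) +++ y = st (st y +++ x) +++ x" using mv unfolding mv_algebra_def by blast

lemma lc: "x +++ (y +++ w) = y +++ (x +++ w)"
proof -
  have "x +++ (y +++ w) = (x +++ y) +++ w" by (rule assoc)
  also have "... = (y +++ x) +++ w" by (simp only: comm[of x y])
  also have "... = y +++ (x +++ w)" by (rule assoc[symmetric])
  finally show ?thesis .
qed
lemmas ac = assoc comm lc

lemma zl[simp]: "z +++ x = x" using zr[of x] comm[of z x] by simp
lemma oner[simp]: "x +++ st z = st z" by (rule one)
lemma onel[simp]: "st z +++ x = st z" using one[of x] comm[of x "st z"] by simp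
lemma compl[simp]: "st x +++ x = st z"
  using ax6[of x "st z"] by simp
lemma compl2[simp]: "x +++ st x = st z" using compl[of x] comm[of x "st x"] by simp
lemma st_inj: "st a = st b \<Longrightarrow> a = b" by (drule arg_cong[of _ _ st]) simp

abbreviation le where "le x y \<equiv> mv_le pl st z x y"
abbreviation od where "od x y \<equiv> mv_odot pl st x y"
abbreviation jn where "jn x y \<equiv> mv_join pl st x y"

lemma le_def': "le x y \<longleftrightarrow> st x +++ y = st z" by (simp add: mv_le_def mv_one_def)
lemma od_def': "od x y = st (st x +++ st y)" by (simp add: mv_odot_def)
lemma jn_def': "jn x y = st (st x +++ y) +++ y" by (simp add: mv_join_def mv_odot_def)

lemma le_refl: "le x x" by (simp add: le_def')
lemma le_ex: "le x y \<longleftrightarrow> (\<exists>w. y = x +++ w)"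
proof
  assume "le x y"
  hence "st x +++ y = st z" by (simp add: le_def')
  hence "y = st (st y +++ x) +++ x" using ax6[of x y] by simp
  hence "y = x +++ st (st y +++ x)" using comm[of "st (st y +++ x)" x] by simp
  thus "\<exists>w. y = x +++ w" by blast
next
  assume "\<exists>w. y = x +++ w" then obtain w where "y = x +++ w" by blast
  thus "le x y" by (simp add: le_def' assoc)
qed
lemma le_trans: "le x y \<Longrightarrow> le y w \<Longrightarrow> le x w"
proof -
  assume "le x y" "le y w"
  then obtain a b where "y = x +++ a" "w = y +++ b" unfolding le_ex by blast
  hence "w = x +++ (a +++ b)" by (simp add: assoc)
  thus ?thesis unfolding le_ex by blast
qed
lemma le_antisym: "le x y \<Longrightarrow> le y x \<Longrightarrow> x = y"
  using ax6[of x y] by (simp add: le_def')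
lemma le_plus: "le a b \<Longrightarrow> le (a +++ c) (b +++ c)"
proof -
  assume "le a b"
  then obtain w where "b = a +++ w" unfolding le_ex by blast
  hence "b +++ c = (a +++ c) +++ w" by (simp only: assoc[symmetric] comm[of w c])
  thus ?thesis unfolding le_ex by blast
qed
lemma le_st: "le a b \<Longrightarrow> le (st b) (st a)" by (simp add: le_def' comm)
lemma le_od: "le a b \<Longrightarrow> le (od x a) (od x b)"
  unfolding od_def' by (intro le_st, subst (1 2) comm[of "st x"], intro le_plus le_st)
lemma le_od2: "le a b \<Longrightarrow> le (od a x) (od b x)"
  unfolding od_def' by (intro le_st le_plus le_st)
lemma od_comm: "od x y = od y x" by (simp add: od_def' comm)
lemma resid: "le (od x s) u \<longleftrightarrow> le s (st x +++ u)" by (simp add: le_def' od_def' assoc[symmetric] lc)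
lemma zero_le: "le z y" by (simp add: le_def')
lemma jn_ub2: "le y (jn x y)" unfolding jn_def' le_ex by (rule exI, rule comm)
lemma jn_comm: "jn x y = jn y x" unfolding jn_def' by (rule ax6)
lemma jn_ub1: "le x (jn x y)" by (subst jn_comm, rule jn_ub2)
lemma jn_lub: "le x u \<Longrightarrow> le y u \<Longrightarrow> le (jn x y) u"
proof -
  assume a: "le x u" "le y u"
  have "le (st (st x +++ y)) (st (st u +++ y))" using a(1) by (intro le_st le_plus le_st)
  hence "le (jn x y) (st (st u +++ y) +++ y)" unfolding jn_def' by (rule le_plus)
  also have "st (st u +++ y) +++ y = u" using ax6[of u y] a(2) by (simp add: le_def')
  finally show ?thesis .
qed
lemma jn_idem: "jn a a = a" by (simp add: jn_def')
lemma od_zero: "od x z = z" by (simp add: od_def')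
lemma od_zero2: "od z x = z" by (simp add: od_def')
lemma od_compl: "od x (st x) = z" by (simp add: od_def')
lemma zero_eq: "le x z \<Longrightarrow> x = z" using le_antisym zero_le by blast

lemma deriv_le: assumes "mv_derivation pl st d" shows "le (d x) x"
proof -
  have d0: "d z = z" using assms[unfolded mv_derivation_def, rule_format, of z z]
    by (simp add: od_zero od_zero2 jn_idem)
  have "z = jn (od (d x) (st x)) (od x (d (st x)))"
    using assms[unfolded mv_derivation_def, rule_format, of x "st x"] by (simp add: od_compl d0)
  hence "le (od (d x) (st x)) z" using jn_ub1 by metis
  hence "od (d x) (st x) = z" by (rule zero_eq)
  hence "st (st (d x) +++ x) = st (st z)" by (simp add: od_def')
  hence "st (d x) +++ x = st z" by (rule st_inj)
  thus ?thesis by (simp add: le_def')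
qed
end

context mvl begin

lemma sup_lub: assumes "mv_complete pl st z" shows "mv_is_lub pl st z S (mv_Sup pl st z S)"
proof -
  obtain s where s: "mv_is_lub pl st z S s" using assms unfolding mv_complete_def by blast
  have uniq: "t = s" if t: "mv_is_lub pl st z S t" for t
  proof -
    have "le t s" using t s unfolding mv_is_lub_def by blast
    moreover have "le s t" using t s unfolding mv_is_lub_def by blast
    ultimately show ?thesis by (rule le_antisym)
  qed
  have "mv_Sup pl st z S = s" unfolding mv_Sup_def
  proof (rule the_equality)
    show "mv_is_lub pl st z S s" by (rule s)
  next
    fix t assume "mv_is_lub pl st z S t" thus "t = s" by (rule uniq)
  qed
  thus ?thesis using s by simp
qed

lemma sup_ub: "mv_complete pl st z \<Longrightarrow> x \<in> S \<Longrightarrow> le x (mv_Sup pl st z S)"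
  using sup_lub unfolding mv_is_lub_def by blast
lemma sup_least: "mv_complete pl st z \<Longrightarrow> (\<And>x. x \<in> S \<Longrightarrow> le x u) \<Longrightarrow> le (mv_Sup pl st z S) u"
  using sup_lub unfolding mv_is_lub_def by blast

lemma sup_der:
  fixes \<Omega> :: "'i set" and d :: "'i \<Rightarrow> 'a \<Rightarrow> 'a"
  assumes c: "mv_complete pl st z" and dd: "\<forall>i\<in>\<Omega>. mv_derivation pl st (d i)"
  shows "mv_derivation pl st (\<lambda>x. mv_Sup pl st z {d i x | i. i \<in> \<Omega>})"
  unfolding mv_derivation_def
proof (intro allI)
  fix x y
  let ?D = "\<lambda>x. mv_Sup pl st z {d i x | i. i \<in> \<Omega>}"
  let ?R = "jn (od (?D x) y) (od x (?D y))"
  have eq: "d i (od x y) = jn (od (d i x) y) (od x (d i y))" if "i \<in> \<Omega>" for i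
  proof -
    have "mv_derivation pl st (d i)" using dd that by blast
    thus ?thesis unfolding mv_derivation_def by (elim allE) assumption
  qed
  have dub: "le (d i w) (?D w)" if "i \<in> \<Omega>" for i w
    by (rule sup_ub[OF c]) (use that in blast)
  have "mv_is_lub pl st z {d i (od x y) | i. i \<in> \<Omega>} ?R"
    unfolding mv_is_lub_def
  proof (intro conjI allI impI ballI)
    fix v assume "v \<in> {d i (od x y) | i. i \<in> \<Omega>}"
    then obtain i where i: "i \<in> \<Omega>" "v = d i (od x y)" by blast
    have a: "le (od (d i x) y) ?R" by (rule le_trans[OF le_od2[OF dub[OF i(1)]] jn_ub1])
    have b: "le (od x (d i y)) ?R" by (rule le_trans[OF le_od[OF dub[OF i(1)]] jn_ub2])
    show "le v ?R" unfolding i(2) eq[OF i(1)] using a b by (rule jn_lub)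
  next
    fix u assume u: "\<forall>v\<in>{d i (od x y) | i. i \<in> \<Omega>}. le v u"
    have u': "le (jn (od (d i x) y) (od x (d i y))) u" if "i \<in> \<Omega>" for i
    proof -
      have "d i (od x y) \<in> {d i (od x y) | i. i \<in> \<Omega>}" using that by blast
      hence "le (d i (od x y)) u" using u by blast
      thus ?thesis by (simp only: eq[OF that])
    qed
    have "le (?D x) (st y +++ u)"
    proof (rule sup_least[OF c])
      fix v assume "v \<in> {d i x | i. i \<in> \<Omega>}"
      then obtain i where i: "i \<in> \<Omega>" "v = d i x" by blast
      have "le (od (d i x) y) u" by (rule le_trans[OF jn_ub1 u'[OF i(1)]])
      hence "le (od y (d i x)) u" by (simp only: od_comm)
      thus "le v (st y +++ u)" unfolding i(2) by (simp only: resid)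
    qed
    hence "le (od y (?D x)) u" by (simp only: resid)
    hence 1: "le (od (?D x) y) u" by (simp only: od_comm)
    have "le (?D y) (st x +++ u)"
    proof (rule sup_least[OF c])
      fix v assume "v \<in> {d i y | i. i \<in> \<Omega>}"
      then obtain i where i: "i \<in> \<Omega>" "v = d i y" by blast
      have "le (od x (d i y)) u" by (rule le_trans[OF jn_ub2 u'[OF i(1)]])
      thus "le v (st x +++ u)" unfolding i(2) by (simp only: resid)
    qed
    hence 2: "le (od x (?D y)) u" by (simp only: resid)
    show "le ?R u" using 1 2 by (rule jn_lub)
  qed
  moreover have "mv_is_lub pl st z {d i (od x y) | i. i \<in> \<Omega>} (?D (od x y))" by (rule sup_lub[OF c])
  ultimately have "le (?D (od x y)) ?R" "le ?R (?D (od x y))" unfolding mv_is_lub_def by blast+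
  thus "?D (od x y) = ?R" by (rule le_antisym)
qed

end

theorem theorem5p9:
  fixes oplus :: "'a \<Rightarrow> 'a \<Rightarrow> 'a" and star :: "'a \<Rightarrow> 'a" and zero :: 'a
    and \<Omega> :: "'i set" and d :: "'i \<Rightarrow> 'a \<Rightarrow> 'a"
  assumes "mv_algebra oplus star zero"
    and "mv_complete oplus star zero"
    and "\<forall>i\<in>\<Omega>. d i \<in> Der oplus star"
  shows "(\<lambda>x. mv_Sup oplus star zero {d i x | i. i \<in> \<Omega>}) \<in> Der oplus star
    \<and> ((\<forall>f\<in>Der oplus star. der_le oplus star zero f f)
       \<and> (\<forall>f\<in>Der oplus star. \<forall>g\<in>Der oplus star.
            der_le oplus star zero f g \<and> der_le oplus star zero g f \<longrightarrow> f = g)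
       \<and> (\<forall>f\<in>Der oplus star. \<forall>g\<in>Der oplus star. \<forall>h\<in>Der oplus star.
            der_le oplus star zero f g \<and> der_le oplus star zero g h \<longrightarrow> der_le oplus star zero f h)
       \<and> (\<forall>D \<subseteq> Der oplus star. \<exists>s\<in>Der oplus star.
            (\<forall>f\<in>D. der_le oplus star zero f s) \<and>
            (\<forall>u\<in>Der oplus star. (\<forall>f\<in>D. der_le oplus star zero f u) \<longrightarrow> der_le oplus star zero s u))
       \<and> (\<forall>D \<subseteq> Der oplus star. \<exists>s\<in>Der oplus star.
            (\<forall>f\<in>D. der_le oplus star zero s f) \<and>
            (\<forall>u\<in>Der oplus star. (\<forall>f\<in>D. der_le oplus star zero u f) \<longrightarrow> der_le oplus star zero u s))
       \<and> (\<lambda>x. zero) \<in> Der oplus star \<and> id \<in> Der oplus star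
       \<and> (\<forall>f\<in>Der oplus star. der_le oplus star zero (\<lambda>x. zero) f \<and> der_le oplus star zero f id))"
proof -
  interpret mvl oplus star zero by unfold_locales (rule assms(1))
  note c = assms(2)
  have supD: "(\<lambda>x. mv_Sup oplus star zero {f x | f. f \<in> D}) \<in> Der oplus star" if "D \<subseteq> Der oplus star" for D
    using sup_der[OF c, of D "\<lambda>f. f"] that unfolding Der_def by auto
  have P1: "(\<lambda>x. mv_Sup oplus star zero {d i x | i. i \<in> \<Omega>}) \<in> Der oplus star"
    using sup_der[OF c, of \<Omega> d] assms(3) unfolding Der_def by auto
  have P2: "\<forall>D \<subseteq> Der oplus star. \<exists>s\<in>Der oplus star.
            (\<forall>f\<in>D. der_le oplus star zero f s) \<and>
            (\<forall>u\<in>Der oplus star. (\<forall>f\<in>D. der_le oplus star zero f u) \<longrightarrow> der_le oplus star zero s u)"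
  proof (intro allI impI)
    fix D assume D: "D \<subseteq> Der oplus star"
    show "\<exists>s\<in>Der oplus star.
            (\<forall>f\<in>D. der_le oplus star zero f s) \<and>
            (\<forall>u\<in>Der oplus star. (\<forall>f\<in>D. der_le oplus star zero f u) \<longrightarrow> der_le oplus star zero s u)"
      apply (rule bexI[OF _ supD[OF D]])
      unfolding der_le_def
      apply (intro conjI ballI allI impI)
       apply (rule sup_ub[OF c]; blast)
      apply (rule sup_least[OF c]; blast)
      done
  qed
  have P3: "\<forall>D \<subseteq> Der oplus star. \<exists>s\<in>Der oplus star.
            (\<forall>f\<in>D. der_le oplus star zero s f) \<and>
            (\<forall>u\<in>Der oplus star. (\<forall>f\<in>D. der_le oplus star zero u f) \<longrightarrow> der_le oplus star zero u s)"
  proof (intro allI impI)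
    fix D assume D: "D \<subseteq> Der oplus star"
    let ?L = "{u \<in> Der oplus star. \<forall>f\<in>D. der_le oplus star zero u f}"
    have L: "?L \<subseteq> Der oplus star" by blast
    show "\<exists>s\<in>Der oplus star.
            (\<forall>f\<in>D. der_le oplus star zero s f) \<and>
            (\<forall>u\<in>Der oplus star. (\<forall>f\<in>D. der_le oplus star zero u f) \<longrightarrow> der_le oplus star zero u s)"
      apply (rule bexI[OF _ supD[OF L]])
      apply (intro conjI ballI impI)
       apply (simp add: der_le_def, intro allI, rule sup_least[OF c])
       apply (auto simp: der_le_def)[1]
      apply (simp add: der_le_def, intro allI, rule sup_ub[OF c])
      apply (auto simp: der_le_def)
      done
  qed
  have Z: "(\<lambda>x. zero) \<in> Der oplus star"
    by (simp add: Der_def mv_derivation_def od_zero od_zero2 jn_idem)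
  have I: "id \<in> Der oplus star"
    by (simp add: Der_def mv_derivation_def jn_idem)
  have B: "\<forall>f\<in>Der oplus star. der_le oplus star zero (\<lambda>x. zero) f \<and> der_le oplus star zero f id"
    by (auto simp: der_le_def zero_le Der_def deriv_le)
  have R: "\<forall>f\<in>Der oplus star. der_le oplus star zero f f"
    by (simp add: der_le_def le_refl)
  have A: "\<forall>f\<in>Der oplus star. \<forall>g\<in>Der oplus star.
            der_le oplus star zero f g \<and> der_le oplus star zero g f \<longrightarrow> f = g"
  proof (intro ballI impI)
    fix f g assume "der_le oplus star zero f g \<and> der_le oplus star zero g f"
    thus "f = g" unfolding der_le_def by (intro ext le_antisym) blast+
  qed
  have T: "\<forall>f\<in>Der oplus star. \<forall>g\<in>Der oplus star. \<forall>h\<in>Der oplus star.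
            der_le oplus star zero f g \<and> der_le oplus star zero g h \<longrightarrow> der_le oplus star zero f h"
    unfolding der_le_def by (meson le_trans)
  show ?thesis
    using P1 P2 P3 Z I B R A T by (intro conjI) assumption+
qed

end
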